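(* Let $n\in\mathbb N$, $\varepsilon\in[0,\frac18]$ and let $C\subset A_n$ be a von Neumann subalgebra such that $\frac1n\sum_{i=1}^n\|X_{n,i}-\mathrm E_C(X_{n,i})\|_2^2\leq\varepsilon$. Then $\dim(Cz)\geq 2^{\,n-\mathrm H(4\varepsilon)n-3}$ for any projection $z\in C$ with $\tau(z)\geq\frac12$.
   Context: $A_n=\bigotimes_{k=1}^n\mathbb C^2\cong\mathbb C^{2^n}$ (equivalently $L^\infty(\{0,1\}^n)$) with its normalized trace $\tau$ (uniform measure) and $\|x\|_2=\tau(x^*x)^{1/2}$. $X_{n,i}=1\otimes\cdots\otimes\sigma\otimes\cdots\otimes1$ with $\sigma=(1,-1)\in\mathbb C^2$ in the $i$-th position. Von Neumann subalgebras are unital $*$-subalgebras; $\mathrm E_C$ is the trace-preserving conditional expectation onto $C$. $\mathrm H(\delta)=-\delta\log_2\delta-(1-\delta)\log_2(1-\delta)$ is the binary entropy function (with the convention $\mathrm H(0)=0$). *)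

theory Defs
  imports "HOL-Analysis.Analysis" "HOL-Library.Function_Algebras"
begin

text \<open>A_n = L^\<infinity>({0,1}^n), with the index set {1..n} modelled by a finite type 'n
  (so n = CARD('n)); points of {0,1}^n are maps 'n \<Rightarrow> bool (True = 1).\<close>

type_synonym 'n alg = "('n \<Rightarrow> bool) \<Rightarrow> complex"

definition tr :: "'n::finite alg \<Rightarrow> complex" where
  "tr f = (\<Sum>x\<in>UNIV. f x) / of_nat (CARD('n \<Rightarrow> bool))"

definition norm2 :: "'n::finite alg \<Rightarrow> real" where
  "norm2 f = sqrt (Re (tr (\<lambda>x. cnj (f x) * f x)))"

text \<open>X_{n,i}: \<sigma> = (1,-1) in the i-th tensor factor.\<close>
definition Xop :: "'n \<Rightarrow> 'n alg" where
  "Xop i = (\<lambda>x. if x i then -1 else 1)"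

text \<open>Von Neumann subalgebra = unital *-subalgebra (finite dimensional case).\<close>
definition vN_subalg :: "'n alg set \<Rightarrow> bool" where
  "vN_subalg C \<longleftrightarrow> (\<lambda>x. 1) \<in> C
     \<and> (\<forall>f\<in>C. \<forall>g\<in>C. (\<lambda>x. f x + g x) \<in> C)
     \<and> (\<forall>a. \<forall>f\<in>C. (\<lambda>x. a * f x) \<in> C)
     \<and> (\<forall>f\<in>C. \<forall>g\<in>C. (\<lambda>x. f x * g x) \<in> C)
     \<and> (\<forall>f\<in>C. (\<lambda>x. cnj (f x)) \<in> C)"

text \<open>Trace-preserving conditional expectation onto C: the tau-orthogonal projection onto C.\<close>
definition condexp :: "'n::finite alg set \<Rightarrow> 'n alg \<Rightarrow> 'n alg" where
  "condexp C f = (THE g. g \<in> C \<and> (\<forall>c\<in>C. tr (\<lambda>x. cnj (c x) * (f x - g x)) = 0))"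

definition is_proj :: "'n alg \<Rightarrow> bool" where
  "is_proj z \<longleftrightarrow> (\<forall>x. z x * z x = z x \<and> cnj (z x) = z x)"

definition cdim :: "'n alg set \<Rightarrow> nat" where
  "cdim S = vector_space.dim (\<lambda>(a::complex) f. (\<lambda>x. a * f x)) S"

definition bin_entropy :: "real \<Rightarrow> real" where
  "bin_entropy d = (if d = 0 then 0 else - d * log 2 d - (1 - d) * log 2 (1 - d))"

end

theory Submission
  imports Defs
begin


definition blk :: "'n alg set \<Rightarrow> ('n \<Rightarrow> bool) \<Rightarrow> ('n \<Rightarrow> bool) set" where
  "blk C x = {y. \<forall>c\<in>C. c y = c x}"

lemma vN_one: "vN_subalg C \<Longrightarrow> (\<lambda>x. 1) \<in> C" by (simp add: vN_subalg_def)
lemma vN_add: "vN_subalg C \<Longrightarrow> f \<in> C \<Longrightarrow> g \<in> C \<Longrightarrow> (\<lambda>x. f x + g x) \<in> C" by (simp add: vN_subalg_def)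
lemma vN_scale: "vN_subalg C \<Longrightarrow> f \<in> C \<Longrightarrow> (\<lambda>x. a * f x) \<in> C" by (simp add: vN_subalg_def)
lemma vN_mult: "vN_subalg C \<Longrightarrow> f \<in> C \<Longrightarrow> g \<in> C \<Longrightarrow> (\<lambda>x. f x * g x) \<in> C" by (simp add: vN_subalg_def)

lemma vN_const: "vN_subalg C \<Longrightarrow> (\<lambda>x. a) \<in> C"
  using vN_scale[OF _ vN_one, of C a] by simp

lemma vN_diff: "vN_subalg C \<Longrightarrow> f \<in> C \<Longrightarrow> g \<in> C \<Longrightarrow> (\<lambda>x. f x - g x) \<in> C"
  using vN_add[OF _ _ vN_scale[of C g "-1"], of f] by simp

lemma vN_prod: assumes V: "vN_subalg C" and fin: "finite A" and h: "\<forall>a\<in>A. f a \<in> C" shows "(\<lambda>x. \<Prod>a\<in>A. f a x) \<in> C"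
  using fin h
proof (induction A rule: finite_induct)
  case empty then show ?case by (simp add: vN_one[OF V])
next
  case (insert a A) then show ?case using vN_mult[OF V, of "f a" "\<lambda>x. \<Prod>a\<in>A. f a x"] by simp
qed

lemma vN_sum: assumes V: "vN_subalg C" and fin: "finite A" and h: "\<forall>a\<in>A. f a \<in> C" shows "(\<lambda>x. \<Sum>a\<in>A. f a x) \<in> C"
  using fin h
proof (induction A rule: finite_induct)
  case empty then show ?case using vN_const[OF V, of 0] by simp
next
  case (insert a A) then show ?case using vN_add[OF V, of "f a" "\<lambda>x. \<Sum>a\<in>A. f a x"] by simp
qed

lemma blk_self: "x \<in> blk C x" by (simp add: blk_def)
lemma blk_sym: "y \<in> blk C x \<longleftrightarrow> x \<in> blk C y" by (auto simp: blk_def)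
lemma blk_eq: "y \<in> blk C x \<Longrightarrow> blk C y = blk C x" by (auto simp: blk_def)

lemma blk_ind:
  fixes C :: "('n::finite) alg set"
  assumes V: "vN_subalg C"
  shows "(\<lambda>w. if w \<in> blk C x then 1 else 0) \<in> C"
proof -
  define c where "c y = (SOME c. c \<in> C \<and> c y \<noteq> c x)" for y
  have c: "c y \<in> C \<and> c y y \<noteq> c y x" if "y \<notin> blk C x" for y
  proof -
    from that obtain d where "d \<in> C" "d y \<noteq> d x" by (auto simp: blk_def)
    then have "\<exists>c. c \<in> C \<and> c y \<noteq> c x" by blast
    then show ?thesis unfolding c_def by (rule someI_ex)
  qed
  define h where "h y w = (1 / (c y x - c y y)) * (c y w - c y y)" for y w
  have hC: "h y \<in> C" if "y \<notin> blk C x" for y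
    unfolding h_def
    by (rule vN_scale[OF V], rule vN_diff[OF V], use c[OF that] in simp, rule vN_const[OF V])
  have "(\<lambda>w. \<Prod>y\<in>-blk C x. h y w) \<in> C"
    by (rule vN_prod[OF V]) (auto intro: hC)
  moreover have "(\<lambda>w. \<Prod>y\<in>-blk C x. h y w) = (\<lambda>w. if w \<in> blk C x then 1 else 0)"
  proof
    fix w
    show "(\<Prod>y\<in>-blk C x. h y w) = (if w \<in> blk C x then 1 else 0)"
    proof (cases "w \<in> blk C x")
      case True
      have "h y w = 1" if "y \<in> -blk C x" for y
      proof -
        have "c y w = c y x" using True c[of y] that by (auto simp: blk_def)
        then show ?thesis using c[of y] that by (auto simp: h_def)
      qed
      then show ?thesis using True by simp
    next
      case False
      have "h w w = 0" by (simp add: h_def)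
      then have "(\<Prod>y\<in>-blk C x. h y w) = 0" using False
        by (intro prod_zero) auto
      then show ?thesis using False by simp
    qed
  qed
  ultimately show ?thesis by simp
qed

definition avg :: "'n alg set \<Rightarrow> ('n::finite) alg \<Rightarrow> 'n alg" where
  "avg C f x = (\<Sum>y\<in>blk C x. f y) / of_nat (card (blk C x))"

lemma avg_in:
  fixes C :: "('n::finite) alg set"
  assumes V: "vN_subalg C"
  shows "avg C f \<in> C"
proof -
  have "(\<lambda>x. \<Sum>y\<in>UNIV. (f y / of_nat (card (blk C y))) * (if x \<in> blk C y then 1 else 0)) \<in> C"
    apply (rule vN_sum[OF V])
     apply simp
    apply (intro ballI)
    apply (rule vN_scale[OF V])
    apply (rule blk_ind[OF V])
    done
  moreover have "(\<lambda>x. \<Sum>y\<in>UNIV. (f y / of_nat (card (blk C y))) * (if x \<in> blk C y then 1 else 0)) = avg C f"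
  proof
    fix x
    have "(\<Sum>y\<in>UNIV. (f y / of_nat (card (blk C y))) * (if x \<in> blk C y then 1 else 0))
        = (\<Sum>y\<in>UNIV. if y \<in> blk C x then f y / of_nat (card (blk C x)) else 0)"
    proof (rule sum.cong[OF refl])
      fix y
      show "(f y / of_nat (card (blk C y))) * (if x \<in> blk C y then 1 else 0)
          = (if y \<in> blk C x then f y / of_nat (card (blk C x)) else 0)"
      proof (cases "y \<in> blk C x")
        case True
        then have "x \<in> blk C y" "blk C y = blk C x" using blk_sym blk_eq by metis+
        then show ?thesis using True by simp
      next
        case False
        then have "x \<notin> blk C y" using blk_sym by metis
        then show ?thesis using False by simp
      qed
    qed
    also have "\<dots> = (\<Sum>y\<in>blk C x. f y / of_nat (card (blk C x)))"
      by (simp add: sum.If_cases)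
    also have "\<dots> = avg C f x" by (simp add: avg_def sum_divide_distrib)
    finally show "(\<Sum>y\<in>UNIV. (f y / of_nat (card (blk C y))) * (if x \<in> blk C y then 1 else 0)) = avg C f x" .
  qed
  ultimately show ?thesis by simp
qed

lemma const_blk_in:
  fixes C :: "('n::finite) alg set"
  assumes V: "vN_subalg C" and g: "\<And>x y. y \<in> blk C x \<Longrightarrow> g y = g x"
  shows "g \<in> C"
proof -
  have "avg C g = g"
  proof
    fix x
    have ne: "card (blk C x) \<noteq> 0" using blk_self[of x C] by (auto simp: card_eq_0_iff)
    have "(\<Sum>y\<in>blk C x. g y) = of_nat (card (blk C x)) * g x" using g[of _ x] by simp
    then show "avg C g x = g x" using ne by (simp add: avg_def)
  qed
  then show ?thesis using avg_in[OF V, of g] by simp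
qed

lemma avg_orth:
  fixes C :: "('n::finite) alg set"
  assumes c: "c \<in> C"
  shows "(\<Sum>x\<in>UNIV. cnj (c x) * (f x - avg C f x)) = 0"
proof -
  have cc: "c y = c x" if "y \<in> blk C x" for x y using that c by (auto simp: blk_def)
  have "(\<Sum>x\<in>UNIV. cnj (c x) * avg C f x)
     = (\<Sum>x\<in>UNIV. \<Sum>y\<in>UNIV. if y \<in> blk C x then cnj (c y) * f y / of_nat (card (blk C y)) else 0)"
  proof (rule sum.cong[OF refl])
    fix x
    have "cnj (c x) * avg C f x = (\<Sum>y\<in>blk C x. cnj (c x) * f y / of_nat (card (blk C x)))"
      by (simp add: avg_def sum_distrib_left sum_divide_distrib)
    also have "\<dots> = (\<Sum>y\<in>blk C x. cnj (c y) * f y / of_nat (card (blk C y)))"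
    proof (rule sum.cong[OF refl])
      fix y assume y: "y \<in> blk C x"
      then have "c y = c x" "blk C y = blk C x" using cc blk_eq by metis+
      then show "cnj (c x) * f y / of_nat (card (blk C x)) = cnj (c y) * f y / of_nat (card (blk C y))" by simp
    qed
    also have "\<dots> = (\<Sum>y\<in>UNIV. if y \<in> blk C x then cnj (c y) * f y / of_nat (card (blk C y)) else 0)"
      by (simp add: sum.If_cases)
    finally show "cnj (c x) * avg C f x = \<dots>" .
  qed
  also have "\<dots> = (\<Sum>y\<in>UNIV. \<Sum>x\<in>UNIV. if x \<in> blk C y then cnj (c y) * f y / of_nat (card (blk C y)) else 0)"
    by (subst sum.swap) (simp add: blk_sym)
  also have "\<dots> = (\<Sum>y\<in>UNIV. cnj (c y) * f y)"
  proof (rule sum.cong[OF refl])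
    fix y
    have ne: "card (blk C y) \<noteq> 0" using blk_self[of y C] by (auto simp: card_eq_0_iff)
    show "(\<Sum>x\<in>UNIV. if x \<in> blk C y then cnj (c y) * f y / of_nat (card (blk C y)) else 0) = cnj (c y) * f y"
      using ne by (simp add: sum.If_cases)
  qed
  finally show ?thesis by (simp add: right_diff_distrib sum_subtractf)
qed

lemma condexp_in:
  fixes C :: "('n::finite) alg set"
  assumes V: "vN_subalg C"
  shows "condexp C f \<in> C"
proof -
  let ?P = "\<lambda>g. g \<in> C \<and> (\<forall>c\<in>C. tr (\<lambda>x. cnj (c x) * (f x - g x)) = 0)"
  have ex: "?P (avg C f)" using avg_in[OF V] avg_orth by (auto simp: tr_def)
  have un: "g = avg C f" if "?P g" for g
  proof -
    define d where "d x = g x - avg C f x" for x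
    have dC: "d \<in> C" unfolding d_def using that avg_in[OF V] vN_diff[OF V] by blast
    have "(\<Sum>x\<in>UNIV. cnj (d x) * (f x - g x)) = 0" "(\<Sum>x\<in>UNIV. cnj (d x) * (f x - avg C f x)) = 0"
      using that dC avg_orth[OF dC] by (auto simp: tr_def)
    then have "(\<Sum>x\<in>UNIV. cnj (d x) * (f x - avg C f x) - cnj (d x) * (f x - g x)) = 0"
      by (simp add: sum_subtractf)
    then have "(\<Sum>x\<in>UNIV. cnj (d x) * d x) = 0"
      by (simp add: d_def algebra_simps)
    moreover have "(\<Sum>x\<in>UNIV. cnj (d x) * d x) = (\<Sum>x\<in>UNIV. complex_of_real ((cmod (d x))\<^sup>2))"
      by (rule sum.cong[OF refl]) (metis complex_norm_square mult.commute)
    ultimately have "(\<Sum>x\<in>UNIV. complex_of_real ((cmod (d x))\<^sup>2)) = 0" by simp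
    then have "(\<Sum>x\<in>UNIV. (cmod (d x))\<^sup>2) = 0"
      by (metis of_real_eq_0_iff of_real_sum)
    then have "\<forall>x\<in>UNIV. (cmod (d x))\<^sup>2 = 0"
      by (subst (asm) sum_nonneg_eq_0_iff) auto
    then show ?thesis by (auto simp: d_def fun_eq_iff)
  qed
  have "?P (condexp C f)" unfolding condexp_def
    by (rule theI[of ?P, OF ex]) (use un in blast)
  then show ?thesis by simp
qed



lemma sum_prod_fun:
  fixes f :: "'n::finite \<Rightarrow> bool \<Rightarrow> real"
  shows "(\<Sum>x\<in>(UNIV::('n\<Rightarrow>bool) set). \<Prod>i\<in>UNIV. f i (x i)) = (\<Prod>i\<in>UNIV. f i True + f i False)"
proof -
  have "(\<Prod>i\<in>UNIV. \<Sum>b\<in>UNIV. f i b) = (\<Sum>g\<in>PiE UNIV (\<lambda>_. UNIV). \<Prod>i\<in>UNIV. f i (g i))"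
    by (rule prod_sum_PiE) auto
  moreover have "(\<Sum>b\<in>UNIV. f i b) = f i True + f i False" for i
    by (simp add: UNIV_bool add.commute)
  ultimately show ?thesis by simp
qed

lemma ball_card:
  fixes y :: "'n::finite \<Rightarrow> bool" and l :: real
  assumes l0: "0 \<le> l" and l1: "l \<le> 1/2"
  shows "real (card {x::'n\<Rightarrow>bool. real (card {i. x i \<noteq> y i}) \<le> l * CARD('n)})
           \<le> 2 powr (bin_entropy l * CARD('n))"
proof (cases "l = 0")
  case True
  have "{x::'n\<Rightarrow>bool. real (card {i. x i \<noteq> y i}) \<le> l * CARD('n)} = {y}"
    using True by (auto simp: fun_eq_iff)
  then show ?thesis using True by (simp add: bin_entropy_def)
next
  case False
  then have lp: "0 < l" using l0 by simp
  define n where "n = real CARD('n)"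
  define B where "B = {x::'n\<Rightarrow>bool. real (card {i. x i \<noteq> y i}) \<le> l * n}"
  define w where "w x = (\<Prod>i\<in>UNIV. if x i \<noteq> y i then l else 1 - l)" for x :: "'n \<Rightarrow> bool"
  have wsum: "(\<Sum>x\<in>UNIV. w x) = 1"
    unfolding w_def by (subst sum_prod_fun) (rule prod.neutral, auto)
  have wpos: "w x \<ge> 0" for x unfolding w_def using l1 lp by (auto intro: prod_nonneg)
  define K where "K = 2 powr (- bin_entropy l * n)"
  have Kw: "K \<le> w x" if "x \<in> B" for x
  proof -
    define d where "d = card {i. x i \<noteq> y i}"
    have dle: "real d \<le> l * n" using that by (simp add: B_def d_def n_def)
    have cnd: "card {i. x i = y i} = CARD('n) - d"
    proof -
      have "{i. x i = y i} = UNIV - {i. x i \<noteq> y i}" by auto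
      then show ?thesis by (simp add: card_Diff_subset d_def)
    qed
    have dn: "d \<le> CARD('n)" unfolding d_def by (simp add: card_mono)
    have "w x = l ^ card {i. x i \<noteq> y i} * (1 - l) ^ card {i. x i = y i}"
      unfolding w_def by (simp add: prod.If_cases Int_def)
    also have "\<dots> = l ^ d * (1 - l) ^ (CARD('n) - d)"
      by (simp only: cnd d_def[symmetric])
    also have "\<dots> = exp (real d * ln l + (n - real d) * ln (1 - l))"
    proof -
      have e1: "(1 - l) ^ (CARD('n) - d) = exp (real (CARD('n) - d) * ln (1 - l))"
        using lp l1 by (simp add: exp_of_nat_mult)
      have e2: "l ^ d = exp (real d * ln l)"
        using lp by (simp add: exp_of_nat_mult)
      show ?thesis using dn by (simp add: e1 e2 exp_add n_def of_nat_diff)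
    qed
    finally have w: "w x = exp (real d * ln l + (n - real d) * ln (1 - l))" .
    have lnle: "ln l - ln (1 - l) \<le> 0" using lp l1 by simp
    have "real d * ln l + (n - real d) * ln (1 - l) = n * ln (1 - l) + real d * (ln l - ln (1 - l))"
      by (simp add: algebra_simps)
    also have "\<dots> \<ge> n * ln (1 - l) + (l * n) * (ln l - ln (1 - l))"
      using dle lnle by (intro add_left_mono mult_right_mono_neg) auto
    finally have ge: "n * ln (1 - l) + (l * n) * (ln l - ln (1 - l)) \<le> real d * ln l + (n - real d) * ln (1 - l)" .
    have "K = exp (n * ln (1 - l) + (l * n) * (ln l - ln (1 - l)))"
      using lp l1 unfolding K_def bin_entropy_def powr_def log_def
      by (simp add: field_simps)
    then show ?thesis using ge w by simp
  qed
  have "real (card B) * K = (\<Sum>x\<in>B. K)" by simp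
  also have "\<dots> \<le> (\<Sum>x\<in>B. w x)" using Kw by (intro sum_mono) auto
  also have "\<dots> \<le> (\<Sum>x\<in>UNIV. w x)" using wpos by (intro sum_mono2) auto
  finally have "real (card B) * K \<le> 1" using wsum by simp
  then have "real (card B) \<le> 1 / K" by (simp add: K_def field_simps)
  also have "1 / K = 2 powr (bin_entropy l * n)" by (simp add: K_def powr_minus divide_inverse)
  finally show ?thesis by (simp add: B_def n_def)
qed



lemma sum_fun_apply: "(\<Sum>i\<in>A. f i) x = (\<Sum>i\<in>A. f i x)"
  by (induction A rule: infinite_finite_induct) (auto simp: plus_fun_def)

lemma vs_fun: "vector_space (\<lambda>(a::complex) (f::'a \<Rightarrow> complex) x. a * f x)"
  by unfold_locales (auto simp: fun_eq_iff algebra_simps plus_fun_def)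

lemma card_le_cdim:
  fixes G V :: "('n::finite) alg set"
  assumes GV: "G \<subseteq> V" and disj: "\<And>g h x. g \<in> G \<Longrightarrow> h \<in> G \<Longrightarrow> g \<noteq> h \<Longrightarrow> g x = 0 \<or> h x = 0"
    and nz: "\<And>g. g \<in> G \<Longrightarrow> \<exists>x. g x \<noteq> 0"
  shows "card G \<le> cdim V"
proof -
  interpret V: vector_space "\<lambda>(a::complex) (f::'n alg) x. a * f x" by (rule vs_fun)
  have indG: "V.independent G"
    unfolding V.independent_explicit_finite_subsets
  proof (intro allI impI ballI)
    fix S u v
    assume S: "S \<subseteq> G" "finite S" and su: "(\<Sum>v\<in>S. (\<lambda>x. u v * v x)) = 0" and v: "v \<in> S"
    obtain x where x: "v x \<noteq> 0" using nz S v by blast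
    have "0 = (\<Sum>w\<in>S. (\<lambda>x. u w * w x)) x" using su by simp
    also have "\<dots> = (\<Sum>w\<in>S. u w * w x)" by (simp add: sum_fun_apply)
    also have "\<dots> = u v * v x"
    proof (rule sum.remove[OF S(2) v, THEN trans])
      have "(\<Sum>w\<in>S - {v}. u w * w x) = 0"
      proof (rule sum.neutral, intro ballI)
        fix w assume "w \<in> S - {v}"
        then have "w x = 0" using disj[of w v x] S v x by auto
        then show "u w * w x = 0" by simp
      qed
      then show "u v * v x + (\<Sum>w\<in>S - {v}. u w * w x) = u v * v x" by simp
    qed
    finally show "u v = 0" using x by simp
  qed
  define W where "W = (\<lambda>y. \<lambda>x. if x = y then (1::complex) else 0) ` (UNIV :: ('n \<Rightarrow> bool) set)"
  have spW: "f \<in> V.span W" for f :: "'n alg"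
  proof -
    have "f = (\<Sum>y\<in>UNIV. (\<lambda>x. f y * (if x = y then 1 else 0)))"
      by (rule ext) (simp add: sum_fun_apply mult.commute[of "f _"] if_distrib[of "\<lambda>t. t * f _"] cong: if_cong)
    also have "\<dots> \<in> V.span W"
      by (intro V.span_sum V.span_scale[where c = "f _", simplified] V.span_base) (auto simp: W_def)
    finally show ?thesis .
  qed
  obtain B where B: "B \<subseteq> V" "V.independent B" "V \<subseteq> V.span B" "card B = V.dim V"
    by (rule V.basis_exists)
  have finB: "finite B" using V.independent_span_bound[of W B] B spW by (auto simp: W_def)
  have "card G \<le> card B" using V.independent_span_bound[OF finB indG] GV B by auto
  then show ?thesis using B by (simp add: cdim_def)
qed


theorem lemma6p6:
  fixes C :: "('n::finite) alg set" and \<epsilon> :: real and z :: "'n alg"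
  assumes "0 \<le> \<epsilon>" and "\<epsilon> \<le> 1/8"
    and "vN_subalg C"
    and "(1 / real CARD('n)) * (\<Sum>i\<in>UNIV. (norm2 (\<lambda>x. Xop i x - condexp C (Xop i) x))\<^sup>2) \<le> \<epsilon>"
    and "z \<in> C" and "is_proj z" and "Re (tr z) \<ge> 1/2"
  shows "real (cdim {(\<lambda>x. c x * z x) | c. c \<in> C})
           \<ge> 2 powr (real CARD('n) - bin_entropy (4 * \<epsilon>) * real CARD('n) - 3)"
proof -
  note e0 = assms(1) and e1 = assms(2) and V = assms(3) and hyp = assms(4)
    and zC = assms(5) and zp = assms(6) and trz = assms(7)
  define n where "n = real CARD('n)"
  have n1: "n \<ge> 1" unfolding n_def
    using finite_UNIV_card_ge_0[where 'a='n] by simp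
  define N where "N = real (CARD('n \<Rightarrow> bool))"
  have N: "N = 2 powr n"
  proof -
    have "CARD('n \<Rightarrow> bool) = card (PiE (UNIV::'n set) (\<lambda>_. UNIV :: bool set))" by simp
    also have "\<dots> = 2 ^ CARD('n)" by (subst card_PiE) simp_all
    finally show ?thesis by (simp add: N_def n_def powr_realpow)
  qed
  have Npos: "N > 0" using N by simp
  define E where "E i = condexp C (Xop i)" for i
  have EC: "E i \<in> C" for i unfolding E_def by (rule condexp_in[OF V])
  define m where "m x = (\<lambda>i. Re (E i x) < 0)" for x
  define D where "D x = real (card {i. x i \<noteq> m x i})" for x
  define q where "q i x = (cmod (Xop i x - E i x))\<^sup>2" for i x
  have pt: "1 \<le> q i x" if "x i \<noteq> m x i" for i x
  proof (cases "x i")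
    case True
    then have "Re (E i x) \<ge> 0" using that by (simp add: m_def)
    moreover have "\<bar>Re (Xop i x - E i x)\<bar> \<le> cmod (Xop i x - E i x)" by (rule abs_Re_le_cmod)
    ultimately have "1 \<le> cmod (Xop i x - E i x)" using True by (simp add: Xop_def)
    then show ?thesis unfolding q_def by (simp add: one_le_power)
  next
    case False
    then have "Re (E i x) < 0" using that by (simp add: m_def)
    moreover have "\<bar>Re (Xop i x - E i x)\<bar> \<le> cmod (Xop i x - E i x)" by (rule abs_Re_le_cmod)
    ultimately have "1 \<le> cmod (Xop i x - E i x)" using False by (simp add: Xop_def)
    then show ?thesis unfolding q_def by (simp add: one_le_power)
  qed
  have Dle: "D x \<le> (\<Sum>i\<in>UNIV. q i x)" for x
  proof -
    have "D x = (\<Sum>i\<in>{i. x i \<noteq> m x i}. 1)" by (simp add: D_def)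
    also have "\<dots> \<le> (\<Sum>i\<in>{i. x i \<noteq> m x i}. q i x)" using pt by (intro sum_mono) auto
    also have "\<dots> \<le> (\<Sum>i\<in>UNIV. q i x)" by (intro sum_mono2) (auto simp: q_def)
    finally show ?thesis .
  qed
  have D0: "D x \<ge> 0" for x by (simp add: D_def)
  have nrm: "(norm2 (\<lambda>x. Xop i x - E i x))\<^sup>2 = (\<Sum>x\<in>UNIV. q i x) / N" for i
  proof -
    have "Re (tr (\<lambda>x. cnj (Xop i x - E i x) * (Xop i x - E i x))) = (\<Sum>x\<in>UNIV. q i x) / N"
    proof -
      have "Re (\<Sum>x\<in>UNIV. cnj (Xop i x - E i x) * (Xop i x - E i x)) = (\<Sum>x\<in>UNIV. q i x)"
        unfolding Re_sum q_def
        by (rule sum.cong[OF refl]) (metis Re_complex_of_real complex_norm_square mult.commute)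
      then show ?thesis by (simp add: tr_def N_def Re_divide_of_nat)
    qed
    moreover have "(\<Sum>x\<in>UNIV. q i x) / N \<ge> 0" using Npos by (intro divide_nonneg_pos sum_nonneg) (auto simp: q_def)
    ultimately show ?thesis by (simp add: norm2_def)
  qed
  have sq: "(\<Sum>i\<in>UNIV. \<Sum>x\<in>UNIV. q i x) \<le> n * \<epsilon> * N"
  proof -
    have "(1 / n) * (\<Sum>i\<in>UNIV. (\<Sum>x\<in>UNIV. q i x) / N) \<le> \<epsilon>"
      using hyp nrm[unfolded E_def] by (simp add: n_def)
    then have "(\<Sum>i\<in>UNIV. (\<Sum>x\<in>UNIV. q i x)) / (n * N) \<le> \<epsilon>"
      by (simp add: sum_divide_distrib[symmetric])
    then show ?thesis using n1 Npos by (simp add: divide_le_eq mult.commute mult.left_commute)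
  qed
  have sumD: "(\<Sum>x\<in>UNIV. D x) \<le> n * \<epsilon> * N"
  proof -
    have "(\<Sum>x\<in>UNIV. D x) \<le> (\<Sum>x\<in>UNIV. \<Sum>i\<in>UNIV. q i x)" by (intro sum_mono Dle)
    also have "\<dots> = (\<Sum>i\<in>UNIV. \<Sum>x\<in>UNIV. q i x)" by (rule sum.swap)
    finally show ?thesis using sq by simp
  qed
  define Z where "Z = {x. z x = 1}"
  have z01: "z x = 0 \<or> z x = 1" for x
  proof -
    have "z x * z x = z x" using zp by (simp add: is_proj_def)
    then have "z x * (z x - 1) = 0" by (simp add: algebra_simps)
    then show ?thesis by simp
  qed
  have cardZ: "real (card Z) \<ge> N / 2"
  proof -
    have "(\<Sum>x\<in>UNIV. Re (z x)) = (\<Sum>x\<in>UNIV. if x \<in> Z then 1 else 0)"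
    proof (rule sum.cong[OF refl])
      fix x show "Re (z x) = (if x \<in> Z then 1 else 0)" using z01[of x] by (auto simp: Z_def)
    qed
    also have "\<dots> = real (card Z)" by (simp add: sum.If_cases)
    finally have "Re (tr z) = real (card Z) / N"
      by (simp add: tr_def N_def Re_divide_of_nat Re_sum)
    then show ?thesis using trz Npos by (simp add: le_divide_eq)
  qed
  define Bad where "Bad = {x. D x > (4 * \<epsilon>) * n}"
  have cardBad: "real (card Bad) \<le> N / 4"
  proof (cases "\<epsilon> = 0")
    case True
    then have "(\<Sum>x\<in>UNIV. D x) \<le> 0" using sumD by simp
    moreover have "(\<Sum>x\<in>UNIV. D x) \<ge> 0" using D0 by (intro sum_nonneg) auto
    ultimately have "(\<Sum>x\<in>UNIV. D x) = 0" by linarith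
    then have "\<forall>x\<in>UNIV. D x = 0" using D0 by (subst (asm) sum_nonneg_eq_0_iff) auto
    then have "Bad = {}" using True by (auto simp: Bad_def)
    then show ?thesis using Npos by simp
  next
    case False
    then have ep: "\<epsilon> > 0" using e0 by simp
    have "real (card Bad) * ((4 * \<epsilon>) * n) = (\<Sum>x\<in>Bad. (4 * \<epsilon>) * n)" by simp
    also have "\<dots> \<le> (\<Sum>x\<in>Bad. D x)" by (intro sum_mono) (auto simp: Bad_def)
    also have "\<dots> \<le> (\<Sum>x\<in>UNIV. D x)" using D0 by (intro sum_mono2) auto
    also have "\<dots> \<le> n * \<epsilon> * N" by (rule sumD)
    finally have "real (card Bad) * (4 * (\<epsilon> * n)) \<le> (\<epsilon> * n) * N" by (simp add: mult_ac)
    moreover have "\<epsilon> * n > 0" using ep n1 by simp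
    ultimately have "(4 * real (card Bad)) * (\<epsilon> * n) \<le> N * (\<epsilon> * n)" by (simp add: mult_ac)
    then have "4 * real (card Bad) \<le> N" using \<open>\<epsilon> * n > 0\<close> by (rule mult_right_le_imp_le)
    then show ?thesis by simp
  qed
  define S where "S = Z - Bad"
  have cardS: "real (card S) \<ge> N / 4"
  proof -
    have "Z \<subseteq> S \<union> Bad" by (auto simp: S_def)
    then have "card Z \<le> card (S \<union> Bad)" by (intro card_mono) auto
    also have "\<dots> \<le> card S + card Bad" by (rule card_Un_le)
    finally have "real (card Z) \<le> real (card S) + real (card Bad)" by linarith
    then show ?thesis using cardZ cardBad by linarith
  qed
  define Bd where "Bd = 2 powr (bin_entropy (4 * \<epsilon>) * real CARD('n))"
  have Bdpos: "Bd > 0" by (simp add: Bd_def)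
  have fib: "real (card {x\<in>S. m x = y}) \<le> Bd" for y
  proof -
    have "{x\<in>S. m x = y} \<subseteq> {x::'n\<Rightarrow>bool. real (card {i. x i \<noteq> y i}) \<le> (4 * \<epsilon>) * CARD('n)}"
      by (auto simp: S_def Bad_def D_def n_def)
    then have "card {x\<in>S. m x = y} \<le> card {x::'n\<Rightarrow>bool. real (card {i. x i \<noteq> y i}) \<le> (4 * \<epsilon>) * CARD('n)}"
      by (intro card_mono) auto
    also have "real \<dots> \<le> Bd" unfolding Bd_def by (rule ball_card) (use e0 e1 in auto)
    finally show ?thesis by simp
  qed
  have cardS2: "real (card S) \<le> real (card (m ` S)) * Bd"
  proof -
    have "S = (\<Union>y\<in>m ` S. {x\<in>S. m x = y})" by auto
    moreover have "card (\<Union>y\<in>m ` S. {x\<in>S. m x = y}) \<le> (\<Sum>y\<in>m ` S. card {x\<in>S. m x = y})"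
      by (rule card_UN_le) simp
    ultimately have "card S \<le> (\<Sum>y\<in>m ` S. card {x\<in>S. m x = y})" by simp
    then have "real (card S) \<le> real (\<Sum>y\<in>m ` S. card {x\<in>S. m x = y})"
      by (simp only: of_nat_le_iff)
    also have "\<dots> = (\<Sum>y\<in>m ` S. real (card {x\<in>S. m x = y}))" by (rule of_nat_sum)
    also have "\<dots> \<le> (\<Sum>y\<in>m ` S. Bd)" by (intro sum_mono fib)
    finally show ?thesis by simp
  qed
  define g where "g y = (\<lambda>x. if m x = y \<and> z x = 1 then (1::complex) else 0)" for y
  define G where "G = g ` (m ` S)"
  have inj: "inj_on g (m ` S)"
  proof (rule inj_onI)
    fix y1 y2 assume y1: "y1 \<in> m ` S" and y2: "y2 \<in> m ` S" and eq: "g y1 = g y2"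
    obtain x where x: "x \<in> S" "y1 = m x" using y1 by auto
    have "g y1 x = 1" using x by (simp add: g_def S_def Z_def)
    then have "g y2 x = 1" using eq by simp
    then show "y1 = y2" using x by (simp add: g_def split: if_splits)
  qed
  have GV: "G \<subseteq> {(\<lambda>x. c x * z x) | c. c \<in> C}"
  proof
    fix h assume "h \<in> G"
    then obtain y where h: "h = g y" by (auto simp: G_def)
    define c where "c x = (if m x = y then (1::complex) else 0)" for x
    have "c \<in> C"
    proof (rule const_blk_in[OF V])
      fix x w assume "w \<in> blk C x"
      then have "E i w = E i x" for i using EC by (auto simp: blk_def)
      then have "m w = m x" by (simp add: m_def)
      then show "c w = c x" by (simp add: c_def)
    qed
    moreover have "h = (\<lambda>x. c x * z x)"
      using z01 by (auto simp: h g_def c_def fun_eq_iff)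
    ultimately show "h \<in> {(\<lambda>x. c x * z x) | c. c \<in> C}" by blast
  qed
  have "card G \<le> cdim {(\<lambda>x. c x * z x) | c. c \<in> C}"
  proof (rule card_le_cdim[OF GV])
    fix h1 h2 x assume "h1 \<in> G" "h2 \<in> G" "h1 \<noteq> h2"
    then obtain y1 y2 where h12: "h1 = g y1" "h2 = g y2" unfolding G_def by (meson imageE)
    with \<open>h1 \<noteq> h2\<close> have "y1 \<noteq> y2" by metis
    with h12 show "h1 x = 0 \<or> h2 x = 0" by (simp add: g_def)
  next
    fix h assume "h \<in> G"
    then obtain x where "x \<in> S" "h = g (m x)" by (auto simp: G_def)
    then have "h x = 1" by (simp add: g_def S_def Z_def)
    then show "\<exists>x. h x \<noteq> 0" by (intro exI[of _ x]) simp
  qed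
  moreover have "card G = card (m ` S)" unfolding G_def by (rule card_image[OF inj])
  ultimately have dimge: "real (card (m ` S)) \<le> real (cdim {(\<lambda>x. c x * z x) | c. c \<in> C})" by simp
  have "2 powr (real CARD('n) - bin_entropy (4 * \<epsilon>) * real CARD('n) - 3) = N / (8 * Bd)"
  proof -
    have e8: "2 powr (3::real) = 8" by (simp add: powr_numeral)
    have "2 powr (real CARD('n) - bin_entropy (4 * \<epsilon>) * real CARD('n) - 3)
        = 2 powr (real CARD('n)) / 2 powr (bin_entropy (4 * \<epsilon>) * real CARD('n)) / 2 powr 3"
      by (simp only: powr_diff)
    then show ?thesis by (simp only: e8 N n_def Bd_def) simp
  qed
  also have "\<dots> \<le> N / (4 * Bd)" using Npos Bdpos by (simp add: frac_le)
  also have "\<dots> \<le> real (card (m ` S))"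
  proof -
    have "N / 4 \<le> real (card (m ` S)) * Bd" using cardS cardS2 by linarith
    then show ?thesis using Bdpos by (simp add: divide_le_eq mult_ac)
  qed
  finally show ?thesis using dimge by simp
qed

end
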